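(* Let $\{X,F\}$ and $\{Y,F\}$ be compatible pairs of skew invertible operators $X,Y,F\in\mathrm{End}(V\otimes V)$, with $F$ invertible. Then $$F_{12}C_{X,1}C_{Y,2}=C_{Y,1}C_{X,2}F_{12},\qquad F_{12}D_{X,1}D_{Y,2}=D_{Y,1}D_{X,2}F_{12},$$ $$F_{12}(C_XD_Y)_2=(C_XD_Y)_1F_{12},\qquad F_{12}(D_YC_X)_1=(D_YC_X)_2F_{12},$$ $$\mathrm{Tr}_{(1)}(C_{X,1}F_{12}^{-1})=(C_XD_F)_2=(D_FC_X)_2,\qquad \mathrm{Tr}_{(2)}(D_{X,2}F_{12}^{-1})=(C_FD_X)_1=(D_XC_F)_1 .$$
   Context: $V$ is a complex vector space of dimension $N$ with a fixed basis. For $X\in\mathrm{End}(V\otimes V)$ and $m<r$, $X_{mr}$ denotes the operator on $V^{\otimes n}$ acting as $X$ on tensor factors $m,r$ and as the identity elsewhere, $X_m:=X_{m,m+1}$; for $Y\in\mathrm{End}(V)$, $Y_m$ acts as $Y$ on factor $m$. $P$ is the flip $u\otimes v\mapsto v\otimes u$; $\mathrm{Tr}_{(i)}$ is partial trace over factor $i$. $X$ is skew invertible if there is $\Psi_X\in\mathrm{End}(V\otimes V)$ with $\mathrm{Tr}_{(2)}X_{12}\Psi_{X,23}=\mathrm{Tr}_{(2)}\Psi_{X,12}X_{23}=P_{13}$; then $C_X:=\mathrm{Tr}_{(1)}\Psi_{X,12}$, $D_X:=\mathrm{Tr}_{(2)}\Psi_{X,12}$. A pair $\{X,F\}$ is compatible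 if $X_1F_2F_1=F_2F_1X_2$ and $X_2F_1F_2=F_1F_2X_1$. *)

theory Defs
  imports "HOL-Analysis.Analysis"
begin

text \<open>V = complex^'n with the standard basis (N = CARD('n)).
  Operators are matrices w.r.t. the product basis; a basis index of V tensor V is
  a pair (i,j) (first component = first tensor factor), of V^3 a triple (i,j,k).
  Convention: A $ row $ column.\<close>

type_synonym 'n op1 = "complex^'n^'n"
type_synonym 'n op2 = "complex^('n\<times>'n)^('n\<times>'n)"
type_synonym 'n op3 = "complex^('n\<times>'n\<times>'n)^('n\<times>'n\<times>'n)"

definition kd :: "'a \<Rightarrow> 'a \<Rightarrow> complex" where
  "kd a b = (if a = b then 1 else 0)"

definition flip :: "('n::finite) op2" where
  "flip = (\<chi> p. \<chi> q. (case (p,q) of ((i,j),(k,l)) \<Rightarrow> kd i l * kd j k))"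

definition on1 :: "('n::finite) op1 \<Rightarrow> 'n op2" where
  "on1 Y = (\<chi> p. \<chi> q. (case (p,q) of ((i,j),(k,l)) \<Rightarrow> Y $ i $ k * kd j l))"
definition on2 :: "('n::finite) op1 \<Rightarrow> 'n op2" where
  "on2 Y = (\<chi> p. \<chi> q. (case (p,q) of ((i,j),(k,l)) \<Rightarrow> kd i k * Y $ j $ l))"

definition on12 :: "('n::finite) op2 \<Rightarrow> 'n op3" where
  "on12 X = (\<chi> p. \<chi> q. (case (p,q) of ((i,j,k),(i',j',k')) \<Rightarrow> X $ (i,j) $ (i',j') * kd k k'))"
definition on23 :: "('n::finite) op2 \<Rightarrow> 'n op3" where
  "on23 X = (\<chi> p. \<chi> q. (case (p,q) of ((i,j,k),(i',j',k')) \<Rightarrow> kd i i' * X $ (j,k) $ (j',k')))"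

definition tr_mid :: "('n::finite) op3 \<Rightarrow> 'n op2" where
  "tr_mid A = (\<chi> p. \<chi> q. (case (p,q) of ((i,k),(i',k')) \<Rightarrow> \<Sum>j\<in>UNIV. A $ (i,j,k) $ (i',j,k')))"

definition tr1 :: "('n::finite) op2 \<Rightarrow> 'n op1" where
  "tr1 A = (\<chi> j. \<chi> j'. \<Sum>i\<in>UNIV. A $ (i,j) $ (i,j'))"
definition tr2 :: "('n::finite) op2 \<Rightarrow> 'n op1" where
  "tr2 A = (\<chi> i. \<chi> i'. \<Sum>j\<in>UNIV. A $ (i,j) $ (i',j))"

definition is_skew_inverse :: "('n::finite) op2 \<Rightarrow> 'n op2 \<Rightarrow> bool" where
  "is_skew_inverse X Psi \<longleftrightarrow>
     tr_mid (on12 X ** on23 Psi) = flip \<and> tr_mid (on12 Psi ** on23 X) = flip"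

definition skew_invertible :: "('n::finite) op2 \<Rightarrow> bool" where
  "skew_invertible X \<longleftrightarrow> (\<exists>Psi. is_skew_inverse X Psi)"

definition skew_inv :: "('n::finite) op2 \<Rightarrow> 'n op2" where
  "skew_inv X = (SOME Psi. is_skew_inverse X Psi)"

definition C_op :: "('n::finite) op2 \<Rightarrow> 'n op1" where
  "C_op X = tr1 (skew_inv X)"
definition D_op :: "('n::finite) op2 \<Rightarrow> 'n op1" where
  "D_op X = tr2 (skew_inv X)"

definition compatible :: "('n::finite) op2 \<Rightarrow> 'n op2 \<Rightarrow> bool" where
  "compatible X F \<longleftrightarrow>
     on12 X ** on23 F ** on12 F = on23 F ** on12 F ** on23 X \<and>
     on23 X ** on12 F ** on23 F = on12 F ** on23 F ** on12 X"

end

theory Submission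
  imports Defs
begin


lemma mm_e: "(A ** B) $ i $ j = (\<Sum>k\<in>UNIV. A$i$k * B$k$j)"
  by (simp add: matrix_matrix_mult_def)

lemma sum_pair: "(\<Sum>p\<in>(UNIV::('a::finite\<times>'b::finite) set). f p) = (\<Sum>a\<in>UNIV. \<Sum>b\<in>UNIV. f (a,b))"
  by (simp add: sum.cartesian_product)

lemma kd_simps[simp]:
  "(x::complex) * (if P then 1 else 0) = (if P then x else 0)"
  "(if P then 1 else 0) * (x::complex) = (if P then x else 0)"
  "(if P then x else 0) * (y::complex) = (if P then x * y else 0)"
  "(y::complex) * (if P then x else 0) = (if P then y * x else 0)"
  by auto

lemma sum_if_const[simp]: "(\<Sum>x\<in>A. if P then f x else 0) = (if P then (\<Sum>x\<in>A. f x) else 0)"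
  by auto

lemma flip_e[simp]: "flip $ (i,j) $ (k,l) = kd i l * kd j k" by (simp add: flip_def)
lemma on1_e[simp]: "on1 Y $ (i,j) $ (k,l) = Y$i$k * kd j l" by (simp add: on1_def)
lemma on2_e[simp]: "on2 Y $ (i,j) $ (k,l) = kd i k * Y$j$l" by (simp add: on2_def)
lemma on12_e[simp]: "on12 X $ (i,j,k) $ (i',j',k') = X$(i,j)$(i',j') * kd k k'" by (simp add: on12_def)
lemma on23_e[simp]: "on23 X $ (i,j,k) $ (i',j',k') = kd i i' * X$(j,k)$(j',k')" by (simp add: on23_def)
lemma tr_mid_e[simp]: "tr_mid A $ (i,k) $ (i',k') = (\<Sum>j\<in>UNIV. A$(i,j,k)$(i',j,k'))" by (simp add: tr_mid_def)
lemma tr1_e[simp]: "tr1 A $ j $ j' = (\<Sum>i\<in>UNIV. A$(i,j)$(i,j'))" by (simp add: tr1_def)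
lemma tr2_e[simp]: "tr2 A $ i $ i' = (\<Sum>j\<in>UNIV. A$(i,j)$(i',j))" by (simp add: tr2_def)
lemma mat1_e[simp]: "(mat 1 :: ('n::finite) op2) $ (i,j) $ (k,l) = kd i k * kd j l"
  by (simp add: mat_def kd_def)

lemma mm2_e: "((A::('n::finite) op2) ** B) $ (i,j) $ (k,l) = (\<Sum>a\<in>UNIV. \<Sum>b\<in>UNIV. A$(i,j)$(a,b) * B$(a,b)$(k,l))"
  by (simp add: mm_e sum_pair)
lemma mm3_e: "((A::('n::finite) op3) ** B) $ (i,j,k) $ (i',j',k') = (\<Sum>a\<in>UNIV. \<Sum>b\<in>UNIV. \<Sum>c\<in>UNIV. A$(i,j,k)$(a,b,c) * B$(a,b,c)$(i',j',k'))"
  by (simp add: mm_e sum_pair)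

lemma on12_23_e: "(on12 A ** on23 B) $ (i,j,k) $ (i',j',k') = (\<Sum>b\<in>UNIV. A$(i,j)$(i',b) * B$(b,k)$(j',k'))"
  by (simp add: mm3_e kd_def)

lemma flat3: "(\<Sum>a\<in>UNIV. \<Sum>b\<in>UNIV. \<Sum>c\<in>UNIV. f a b c) = (\<Sum>(a,b,c)\<in>(UNIV::('a::finite\<times>'b::finite\<times>'c::finite) set). f a b c)"
  by (simp add: sum_pair)
lemma flat4: "(\<Sum>a\<in>UNIV. \<Sum>b\<in>UNIV. \<Sum>c\<in>UNIV. \<Sum>d\<in>UNIV. f a b c d) = (\<Sum>(a,b,c,d)\<in>(UNIV::('a::finite\<times>'b::finite\<times>'c::finite\<times>'d::finite) set). f a b c d)"
  by (simp add: sum_pair)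
lemma flat5: "(\<Sum>a\<in>UNIV. \<Sum>b\<in>UNIV. \<Sum>c\<in>UNIV. \<Sum>d\<in>UNIV. \<Sum>e\<in>UNIV. f a b c d e) = (\<Sum>(a,b,c,d,e)\<in>(UNIV::('a::finite\<times>'b::finite\<times>'c::finite\<times>'d::finite\<times>'e::finite) set). f a b c d e)"
  by (simp add: sum_pair)

lemma flat2: "(\<Sum>a\<in>UNIV. \<Sum>b\<in>UNIV. f a b) = (\<Sum>(a,b)\<in>(UNIV::('a::finite\<times>'b::finite) set). f a b)"
  by (simp add: sum_pair)

lemma kd_sym: "kd a b = kd b a" by (simp add: kd_def eq_commute)

definition star :: "('n::finite) op2 \<Rightarrow> 'n op2 \<Rightarrow> 'n op2" where
  "star A B = tr_mid (on12 A ** on23 B)"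

lemma star_e: "star A B $ (i,k) $ (i',k') = (\<Sum>j\<in>UNIV. \<Sum>b\<in>UNIV. A$(i,j)$(i',b) * B$(b,k)$(j,k'))"
  by (simp add: star_def on12_23_e)

definition rho :: "('n::finite) op2 \<Rightarrow> 'n op2" where
  "rho A = (\<chi> p q. A $ (fst p, snd q) $ (snd p, fst q))"

lemma rho_e[simp]: "rho A $ (i,i') $ (b,j) = A$(i,j)$(i',b)" by (simp add: rho_def)

lemma op2_eqI: "(\<And>i j k l. A $ (i,j) $ (k,l) = B $ (i,j) $ (k,l)) \<Longrightarrow> A = (B::('n::finite) op2)"
  by (simp add: vec_eq_iff)

lemma rho_star: "rho (star A B) = rho A ** rho B"
  apply (rule op2_eqI)
  apply (simp add: star_e mm2_e)
  apply (subst sum.swap) by simp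

lemma rho_inj: "rho A = rho B \<Longrightarrow> A = B"
  apply (rule op2_eqI)
  by (metis rho_e)

lemma rho_flip: "rho flip = mat 1"
  apply (rule op2_eqI)
  apply (simp add: kd_def sum_pair)
  done

lemma star_assoc: "star (star A B) C = star A (star B C)"
  by (rule rho_inj) (simp add: rho_star matrix_mul_assoc)

lemma star_flip_l[simp]: "star flip A = A"
  by (rule rho_inj) (simp add: rho_star rho_flip)
lemma star_flip_r[simp]: "star A flip = A"
  by (rule rho_inj) (simp add: rho_star rho_flip)

definition tau :: "('n::finite) op2 \<Rightarrow> 'n op2" where "tau A = flip ** A ** flip"

lemma tau_e[simp]: "tau A $ (i,j) $ (k,l) = A $ (j,i) $ (l,k)"
  by (simp add: tau_def mm2_e kd_def)

lemma star_tau: "star (tau A) (tau B) = tau (star B A)"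
  apply (rule op2_eqI) apply (simp add: star_e)
  apply (subst sum.swap) by (simp add: mult.commute)

lemma tau_flip[simp]: "tau flip = flip" apply (rule op2_eqI)
  apply (simp add: kd_def sum_pair)
  done
lemma tau_tau[simp]: "tau (tau A) = A" by (rule op2_eqI) simp
lemma tau_mult: "tau (A ** B) = tau A ** tau B"
  apply (rule op2_eqI) apply (simp add: mm2_e)
  apply (subst sum.swap) by simp
lemma tau_on1[simp]: "tau (on1 A) = on2 A" by (rule op2_eqI) simp
lemma tau_on2[simp]: "tau (on2 A) = on1 A" by (rule op2_eqI) simp
lemma tau_one[simp]: "tau (mat 1) = mat 1" by (rule op2_eqI) simp

lemma star_one_l: "star (mat 1) P = on2 (tr1 P)"
  apply (rule op2_eqI)
  apply (simp add: star_e kd_def sum_pair)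
  done
lemma star_one_r: "star P (mat 1) = on1 (tr2 P)"
  apply (rule op2_eqI)
  apply (simp add: star_e kd_def sum_pair)
  done

definition trw1 :: "('n::finite) op1 \<Rightarrow> 'n op3 \<Rightarrow> 'n op2" where
  "trw1 C M = (\<chi> p q. case (p,q) of ((j,k),(j',k')) \<Rightarrow> \<Sum>i\<in>UNIV. \<Sum>a\<in>UNIV. C$i$a * M$(a,j,k)$(i,j',k'))"
lemma trw1_e[simp]: "trw1 C M $ (j,k) $ (j',k') = (\<Sum>i\<in>UNIV. \<Sum>a\<in>UNIV. C$i$a * M$(a,j,k)$(i,j',k'))"
  by (simp add: trw1_def)

lemma TR: "trw1 C (on12 A ** on23 X ** on12 B) = star (star (tau A) (B ** on1 C) ** flip) X"
  apply (rule op2_eqI)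
  apply (simp add: star_e mm2_e mm3_e sum_distrib_left sum_distrib_right kd_def)
  apply (simp only: flat5)
  apply (rule sum.reindex_bij_witness[where j="\<lambda>(ia,a,n,na,nb). (na,nb,a,n,ia)" and i="\<lambda>(ja,b,n,na,nb). (nb,n,na,ja,b)"])
  apply (auto simp: mult_ac)
  done
lemma op3_eqI: "(\<And>i j k i' j' k'. A $ (i,j,k) $ (i',j',k') = B $ (i,j,k) $ (i',j',k')) \<Longrightarrow> A = (B::('n::finite) op3)"
  by (simp add: vec_eq_iff)
lemma mat1_3_e[simp]: "(mat 1 :: ('n::finite) op3) $ (i,j,k) $ (i',j',k') = kd i i' * kd j j' * kd k k'"
  by (simp add: mat_def kd_def)
lemma mat1_1_e: "(mat 1 :: ('n::finite) op1) $ i $ j = kd i j"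
  by (simp add: mat_def kd_def)

lemma trw1_on23: "trw1 C (on23 F ** M) = F ** trw1 C M"
  apply (rule op2_eqI)
  apply (simp add: mm2_e mm3_e sum_distrib_left sum_distrib_right kd_def sum_pair)
  apply (simp only: flat4)
  apply (rule sum.reindex_bij_witness[where j="\<lambda>(ia,a,n,na). (n,na,ia,a)" and i="\<lambda>(a,b,n,na). (n,na,a,b)"])
  apply (auto simp: mult_ac)
  done

lemma trw1_on12_on23: "trw1 C (on12 X ** on23 B) = on1 (tr1 (on1 C ** X)) ** B"
  apply (rule op2_eqI)
  apply (simp add: mm2_e mm3_e sum_distrib_left sum_distrib_right kd_def sum_pair)
  apply (simp only: flat3)
  apply (rule sum.reindex_bij_witness[where j="\<lambda>(ia,a,n). (n,ia,a)" and i="\<lambda>(a,n,na). (n,na,a)"])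
  apply (auto simp: mult_ac)
  done

definition trw3 :: "('n::finite) op1 \<Rightarrow> 'n op3 \<Rightarrow> 'n op2" where
  "trw3 D M = (\<chi> p q. case (p,q) of ((i,j),(i',j')) \<Rightarrow> \<Sum>k\<in>UNIV. \<Sum>a\<in>UNIV. M$(i,j,k)$(i',j',a) * D$a$k)"
lemma trw3_e[simp]: "trw3 D M $ (i,j) $ (i',j') = (\<Sum>k\<in>UNIV. \<Sum>a\<in>UNIV. M$(i,j,k)$(i',j',a) * D$a$k)"
  by (simp add: trw3_def)

lemma trw3_on12: "trw3 D (on12 F ** M) = F ** trw3 D M"
  apply (rule op2_eqI)
  apply (simp add: mm2_e mm3_e sum_distrib_left sum_distrib_right kd_def sum_pair)
  apply (simp only: flat4)
  apply (rule sum.reindex_bij_witness[where j="\<lambda>(ka,a,n,na). (n,na,ka,a)" and i="\<lambda>(a,b,n,na). (n,na,a,b)"])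
  apply (auto simp: mult_ac)
  done

lemma trw3_on23_on12: "trw3 D (on23 X ** on12 B) = on2 (tr2 (X ** on2 D)) ** B"
  apply (rule op2_eqI)
  apply (simp add: mm2_e mm3_e sum_distrib_left sum_distrib_right kd_def sum_pair)
  apply (simp only: flat3)
  apply (rule sum.reindex_bij_witness[where j="\<lambda>(ka,a,n). (n,ka,a)" and i="\<lambda>(b,n,na). (n,na,b)"])
  apply (auto simp: mult_ac)
  done

lemma TR3: "trw3 D (on23 A ** on12 X ** on23 B) = star X (flip ** star A (tau (B ** on2 D)))"
  apply (rule op2_eqI)
  apply (simp add: star_e mm2_e mm3_e sum_distrib_left sum_distrib_right kd_def sum_pair)
  apply (simp only: flat5)
  apply (rule sum.reindex_bij_witness[where j="\<lambda>(ka,a,n,na,nb). (nb,n,ka,na,a)" and i="\<lambda>(ja,b,n,na,nb). (n,nb,b,na,ja)"])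
  apply (auto simp: mult_ac)
  done

lemma I5a: "star A (on2 C ** flip) = on2 C ** A"
  apply (rule op2_eqI)
  apply (simp add: star_e mm2_e sum_distrib_left sum_distrib_right kd_def sum_pair)
  apply (rule sum.reindex_bij_witness[where j="\<lambda>ja. ja" and i="\<lambda>b. b"])
  apply (auto simp: mult_ac)
  done
lemma I5b: "star (on2 C ** flip) A = A ** on1 C"
  apply (rule op2_eqI)
  apply (simp add: star_e mm2_e sum_distrib_left sum_distrib_right kd_def sum_pair)
  apply (rule sum.reindex_bij_witness[where j="\<lambda>ja. ja" and i="\<lambda>a. a"])
  apply (auto simp: mult_ac)
  done
lemma I5c: "star A (flip ** on1 D) = on2 D ** A"
  apply (rule op2_eqI)
  apply (simp add: star_e mm2_e sum_distrib_left sum_distrib_right kd_def sum_pair)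
  apply (rule sum.reindex_bij_witness[where j="\<lambda>ja. ja" and i="\<lambda>b. b"])
  apply (auto simp: mult_ac)
  done
lemma I5d: "star (flip ** on1 D) A = A ** on1 D"
  apply (rule op2_eqI)
  apply (simp add: star_e mm2_e sum_distrib_left sum_distrib_right kd_def sum_pair)
  apply (rule sum.reindex_bij_witness[where j="\<lambda>ja. ja" and i="\<lambda>a. a"])
  apply (auto simp: mult_ac)
  done

lemma EQ1: "star (tau A) (B ** on1 C) = star (tau (on1 C ** A)) B"
  apply (rule op2_eqI)
  apply (simp add: star_e mm2_e sum_distrib_left sum_distrib_right kd_def sum_pair)
  apply (simp only: flat3)
  apply (rule sum.reindex_bij_witness[where j="\<lambda>(ja,b,n). (n,b,ja)" and i="\<lambda>(ja,b,n). (n,b,ja)"])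
  apply (auto simp: mult_ac)
  done
lemma EQ3: "star A (tau (B ** on2 D)) = star (on2 D ** A) (tau B)"
  apply (rule op2_eqI)
  apply (simp add: star_e mm2_e sum_distrib_left sum_distrib_right kd_def sum_pair)
  apply (simp only: flat3)
  apply (rule sum.reindex_bij_witness[where j="\<lambda>(ja,b,n). (n,b,ja)" and i="\<lambda>(ja,b,n). (n,b,ja)"])
  apply (auto simp: mult_ac)
  done


lemma on12_mult: "on12 (A ** B) = on12 A ** on12 (B::('n::finite) op2)"
  apply (rule op3_eqI)
  apply (simp add: mm2_e mm3_e sum_distrib_left sum_distrib_right kd_def sum_pair)
  done
lemma on23_mult: "on23 (A ** B) = on23 A ** on23 (B::('n::finite) op2)"
  apply (rule op3_eqI)
  apply (simp add: mm2_e mm3_e sum_distrib_left sum_distrib_right kd_def sum_pair)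
  done
lemma on12_one: "on12 (mat 1) = (mat 1::('n::finite) op3)"
  apply (rule op3_eqI)
  apply (simp add: kd_def sum_pair)
  done
lemma on23_one: "on23 (mat 1) = (mat 1::('n::finite) op3)"
  apply (rule op3_eqI)
  apply (simp add: kd_def sum_pair)
  done
lemma on1_mult: "on1 (A ** B) = on1 A ** on1 (B::('n::finite) op1)"
  apply (rule op2_eqI)
  apply (simp add: mm2_e mm_e sum_distrib_left sum_distrib_right kd_def sum_pair)
  done
lemma on2_mult: "on2 (A ** B) = on2 A ** on2 (B::('n::finite) op1)"
  apply (rule op2_eqI)
  apply (simp add: mm2_e mm_e sum_distrib_left sum_distrib_right kd_def sum_pair)
  done
lemma on1_one: "on1 (mat 1) = (mat 1::('n::finite) op2)"
  apply (rule op2_eqI)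
  apply (simp add: mat1_1_e kd_def)
  done
lemma on2_one: "on2 (mat 1) = (mat 1::('n::finite) op2)"
  apply (rule op2_eqI)
  apply (simp add: mat1_1_e kd_def)
  done
lemma on12_comm: "on1 A ** on2 B = on2 B ** on1 (A::('n::finite) op1)"
  apply (rule op2_eqI)
  apply (simp add: mm2_e kd_def mult.commute sum_pair)
  done

lemma tr1_cyc: "tr1 (on1 A ** M) = tr1 (M ** on1 A)"
  apply (simp add: vec_eq_iff mm2_e sum_distrib_left sum_distrib_right kd_def)
  apply (intro allI) apply (subst sum.swap) by (simp add: mult.commute)
lemma tr1_r2: "tr1 (M ** on2 B) = tr1 M ** B"
  apply (simp add: vec_eq_iff mm2_e mm_e sum_distrib_left sum_distrib_right kd_def sum_pair)
  apply (intro allI)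
  apply (simp only: flat2)
  apply (rule sum.reindex_bij_witness[where j="\<lambda>(ib,b). (b,ib)" and i="\<lambda>(k,n). (n,k)"])
  apply (auto simp: mult_ac)
  done
lemma tr1_l2: "tr1 (on2 B ** M) = B ** tr1 M"
  apply (simp add: vec_eq_iff mm2_e mm_e sum_distrib_left sum_distrib_right kd_def sum_pair)
  apply (intro allI)
  apply (simp only: flat2)
  apply (rule sum.reindex_bij_witness[where j="\<lambda>(ib,b). (b,ib)" and i="\<lambda>(k,n). (n,k)"])
  apply (auto simp: mult_ac)
  done
lemma tr1_tau: "tr1 (tau M) = tr2 M"
  by (simp add: vec_eq_iff)
lemma tr2_cyc: "tr2 (on2 A ** M) = tr2 (M ** on2 A)"
  apply (simp add: vec_eq_iff mm2_e sum_distrib_left sum_distrib_right kd_def)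
  apply (intro allI) apply (subst sum.swap) by (simp add: mult.commute)
lemma tr2_r1: "tr2 (M ** on1 B) = tr2 M ** B"
  apply (simp add: vec_eq_iff mm2_e mm_e sum_distrib_left sum_distrib_right kd_def sum_pair)
  apply (intro allI)
  apply (simp only: flat2)
  apply (rule sum.reindex_bij_witness[where j="\<lambda>(j,a). (a,j)" and i="\<lambda>(k,n). (n,k)"])
  apply (auto simp: mult_ac)
  done
lemma tr2_l1: "tr2 (on1 B ** M) = B ** tr2 M"
  apply (simp add: vec_eq_iff mm2_e mm_e sum_distrib_left sum_distrib_right kd_def sum_pair)
  apply (intro allI)
  apply (simp only: flat2)
  apply (rule sum.reindex_bij_witness[where j="\<lambda>(j,a). (a,j)" and i="\<lambda>(k,n). (n,k)"])
  apply (auto simp: mult_ac)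
  done
lemma tr2_tau: "tr2 (tau M) = tr1 M"
  by (simp add: vec_eq_iff)

lemma flip_flip: "flip ** flip = (mat 1 :: ('n::finite) op2)"
  apply (rule op2_eqI)
  apply (simp add: mm2_e kd_def sum_pair)
  done

lemma op1_eqI: "(\<And>i j. A $ i $ j = B $ i $ j) \<Longrightarrow> A = (B::('n::finite) op1)"
  by (simp add: vec_eq_iff)

lemma tr_unit1: assumes "star P X = flip" shows "tr1 (on1 (tr1 P) ** X) = mat 1"
proof -
  have h: "\<And>m k k'. (\<Sum>j\<in>UNIV. \<Sum>b\<in>UNIV. P$(m,j)$(m,b) * X$(b,k)$(j,k')) = kd m k' * kd k m"
  proof -
    fix m k k'
    have "star P X $ (m,k) $ (m,k') = flip $ (m,k) $ (m,k')" using assms by simp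
    thus "(\<Sum>j\<in>UNIV. \<Sum>b\<in>UNIV. P$(m,j)$(m,b) * X$(b,k)$(j,k')) = kd m k' * kd k m" by (simp only: star_e flip_e)
  qed
  show ?thesis
  proof (rule op1_eqI)
    fix k k'
      have "tr1 (on1 (tr1 P) ** X) $ k $ k' = (\<Sum>m\<in>UNIV. \<Sum>j\<in>UNIV. \<Sum>b\<in>UNIV. P$(m,j)$(m,b) * X$(b,k)$(j,k'))"
        apply (simp add: mm2_e sum_distrib_left sum_distrib_right kd_def)
  apply (simp only: flat3)
  apply (rule sum.reindex_bij_witness[where j="\<lambda>(i,a,n). (n,i,a)" and i="\<lambda>(m,j,b). (j,b,m)"])
  apply (auto simp: mult_ac)
        done
      also have "\<dots> = (\<Sum>m\<in>UNIV. kd m k' * kd k m)" using h by simp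
      also have "\<dots> = mat 1 $ k $ k'" by (simp add: kd_def mat_def)
      finally show "tr1 (on1 (tr1 P) ** X) $ k $ k' = mat 1 $ k $ k'" .
  qed
qed

lemma tr_unit2: assumes "star X P = flip" shows "tr2 (X ** on2 (tr2 P)) = mat 1"
proof -
  have h: "\<And>i i' k. (\<Sum>j\<in>UNIV. \<Sum>b\<in>UNIV. X$(i,j)$(i',b) * P$(b,k)$(j,k)) = kd i k * kd k i'"
  proof -
    fix i i' k
    have "star X P $ (i,k) $ (i',k) = flip $ (i,k) $ (i',k)" using assms by simp
    thus "(\<Sum>j\<in>UNIV. \<Sum>b\<in>UNIV. X$(i,j)$(i',b) * P$(b,k)$(j,k)) = kd i k * kd k i'" by (simp only: star_e flip_e)
  qed
  show ?thesis
  proof (rule op1_eqI)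
    fix i i'
      have "tr2 (X ** on2 (tr2 P)) $ i $ i' = (\<Sum>k\<in>UNIV. \<Sum>j\<in>UNIV. \<Sum>b\<in>UNIV. X$(i,j)$(i',b) * P$(b,k)$(j,k))"
        apply (simp add: mm2_e sum_distrib_left sum_distrib_right kd_def)
  apply (simp only: flat3)
  apply (rule sum.reindex_bij_witness[where j="\<lambda>(j,b,n). (n,j,b)" and i="\<lambda>(k,j,b). (j,b,k)"])
  apply (auto simp: mult_ac)
        done
      also have "\<dots> = (\<Sum>k\<in>UNIV. kd i k * kd k i')" using h by simp
      also have "\<dots> = mat 1 $ i $ i'" by (simp add: kd_def mat_def)
      finally show "tr2 (X ** on2 (tr2 P)) $ i $ i' = mat 1 $ i $ i'" .
  qed
qed

lemma inv_props: assumes "invertible (F::('n::finite) op2)"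
  shows "F ** matrix_inv F = mat 1" "matrix_inv F ** F = mat 1"
proof -
  have "\<exists>A'. F ** A' = mat 1 \<and> A' ** F = mat 1" using assms by (simp add: invertible_def)
  hence "F ** matrix_inv F = mat 1 \<and> matrix_inv F ** F = mat 1"
    unfolding matrix_inv_def by (rule someI_ex)
  thus "F ** matrix_inv F = mat 1" "matrix_inv F ** F = mat 1" by auto
qed

lemma skew_props: assumes "skew_invertible X"
  shows "star X (skew_inv X) = flip" "star (skew_inv X) X = flip"
proof -
  have "is_skew_inverse X (skew_inv X)"
    using assms unfolding skew_invertible_def skew_inv_def by (rule someI_ex)
  thus "star X (skew_inv X) = flip" "star (skew_inv X) X = flip"
    by (auto simp: is_skew_inverse_def star_def)
qed

lemma star_one_flip: "star (U ** flip) X = mat 1 \<Longrightarrow> star X P = flip \<Longrightarrow> U ** flip = star (mat 1) P"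
  by (metis star_assoc star_flip_r)

lemma Ka:
  fixes X F :: "('n::finite) op2"
  assumes sX: "skew_invertible X" and sF: "skew_invertible F" and iF: "invertible F"
    and cp: "compatible X F"
  shows "matrix_inv F ** on1 (C_op X) = on2 (C_op X) ** tau (skew_inv F)"
proof -
  define G where "G = matrix_inv F"
  define C where "C = C_op X"
  define Ps where "Ps = skew_inv F"
  have FG: "F ** G = mat 1" and GF: "G ** F = mat 1" using inv_props[OF iF] by (auto simp: G_def)
  have GF12: "\<And>R. on12 G ** (on12 F ** R) = R" by (simp add: matrix_mul_assoc on12_mult[symmetric] GF on12_one)
  have GF23: "\<And>R. on23 G ** (on23 F ** R) = R" by (simp add: matrix_mul_assoc on23_mult[symmetric] GF on23_one)
  have c1: "on12 X ** on23 F ** on12 F = on23 F ** on12 F ** on23 X" using cp by (simp add: compatible_def)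
  have h1: "on12 X ** on23 F = on23 F ** (on12 F ** on23 X ** on12 G)"
  proof -
    have "on12 X ** on23 F = (on12 X ** on23 F ** on12 F) ** on12 G"
      by (simp add: matrix_mul_assoc[symmetric] on12_mult[symmetric] FG on12_one)
    also have "\<dots> = on23 F ** (on12 F ** on23 X ** on12 G)" by (simp add: c1 matrix_mul_assoc)
    finally show ?thesis .
  qed
  have u: "tr1 (on1 C ** X) = mat 1" unfolding C_def C_op_def by (rule tr_unit1[OF skew_props(2)[OF sX]])
  have "F = F ** trw1 C (on12 F ** on23 X ** on12 G)"
    using arg_cong[OF h1, of "trw1 C"] by (simp add: trw1_on12_on23 u on1_one trw1_on23)
  hence T: "trw1 C (on12 F ** on23 X ** on12 G) = mat 1"
    by (metis GF matrix_mul_assoc matrix_mul_lid)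
  define U where "U = star (tau F) (G ** on1 C)"
  have "U ** flip = star (mat 1) (skew_inv X)"
    using T by (intro star_one_flip[OF _ skew_props(1)[OF sX]]) (simp add: TR U_def)
  hence "U ** flip = on2 C" by (simp add: star_one_l C_def C_op_def)
  hence U: "U = on2 C ** flip" by (metis flip_flip matrix_mul_assoc matrix_mul_rid)
  have fl: "star (tau Ps) (tau F) = flip" using skew_props(1)[OF sF] by (simp add: star_tau Ps_def)
  have "G ** on1 C = star (star (tau Ps) (tau F)) (G ** on1 C)" by (simp add: fl)
  also have "\<dots> = star (tau Ps) U" by (simp add: star_assoc U_def)
  also have "\<dots> = on2 C ** tau Ps" by (simp add: U I5a)
  finally show ?thesis by (simp add: G_def C_def Ps_def)
qed

lemma Kb:
  fixes X F :: "('n::finite) op2"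
  assumes sX: "skew_invertible X" and sF: "skew_invertible F" and iF: "invertible F"
    and cp: "compatible X F"
  shows "on1 (C_op X) ** matrix_inv F = tau (skew_inv F) ** on2 (C_op X)"
proof -
  define G where "G = matrix_inv F"
  define C where "C = C_op X"
  define Ps where "Ps = skew_inv F"
  have FG: "F ** G = mat 1" and GF: "G ** F = mat 1" using inv_props[OF iF] by (auto simp: G_def)
  have GF12: "\<And>R. on12 G ** (on12 F ** R) = R" by (simp add: matrix_mul_assoc on12_mult[symmetric] GF on12_one)
  have GF23: "\<And>R. on23 G ** (on23 F ** R) = R" by (simp add: matrix_mul_assoc on23_mult[symmetric] GF on23_one)
  have c2: "on23 X ** on12 F ** on23 F = on12 F ** on23 F ** on12 X" using cp by (simp add: compatible_def)
  have h1: "on12 G ** on23 X ** on12 F = on23 F ** (on12 X ** on23 G)"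
  proof -
    have "on12 G ** on23 X ** on12 F = on12 G ** (on23 X ** on12 F ** on23 F) ** on23 G"
      by (simp add: matrix_mul_assoc[symmetric] on23_mult[symmetric] FG on23_one)
    also have "\<dots> = on12 G ** (on12 F ** on23 F ** on12 X) ** on23 G" by (simp add: c2)
    also have "\<dots> = on23 F ** (on12 X ** on23 G)"
      by (simp add: matrix_mul_assoc[symmetric] GF12)
    finally show ?thesis .
  qed
  have u: "tr1 (on1 C ** X) = mat 1" unfolding C_def C_op_def by (rule tr_unit1[OF skew_props(2)[OF sX]])
  have T: "trw1 C (on12 G ** on23 X ** on12 F) = mat 1"
    using arg_cong[OF h1, of "trw1 C"] by (simp add: trw1_on12_on23 u on1_one trw1_on23 FG)
  define U where "U = star (tau G) (F ** on1 C)"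
  have "U ** flip = star (mat 1) (skew_inv X)"
    using T by (intro star_one_flip[OF _ skew_props(1)[OF sX]]) (simp add: TR U_def)
  hence "U ** flip = on2 C" by (simp add: star_one_l C_def C_op_def)
  hence U: "U = on2 C ** flip" by (metis flip_flip matrix_mul_assoc matrix_mul_rid)
  have U2: "U = star (tau (on1 C ** G)) F" by (simp add: U_def EQ1)
  have "tau (on1 C ** G) = star (tau (on1 C ** G)) (star F Ps)"
    using skew_props(1)[OF sF] by (simp add: Ps_def)
  also have "\<dots> = star U Ps" by (simp add: U2 star_assoc)
  also have "\<dots> = Ps ** on1 C" by (simp add: U I5b)
  finally have "tau (on1 C ** G) = Ps ** on1 C" .
  hence "on1 C ** G = tau (Ps ** on1 C)" by (metis tau_tau)
  thus ?thesis by (simp add: tau_mult G_def C_def Ps_def)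
qed

lemma Kc:
  fixes X F :: "('n::finite) op2"
  assumes sX: "skew_invertible X" and sF: "skew_invertible F" and iF: "invertible F"
    and cp: "compatible X F"
  shows "matrix_inv F ** on2 (D_op X) = on1 (D_op X) ** tau (skew_inv F)"
proof -
  define G where "G = matrix_inv F"
  define D where "D = D_op X"
  define Ps where "Ps = skew_inv F"
  have FG: "F ** G = mat 1" and GF: "G ** F = mat 1" using inv_props[OF iF] by (auto simp: G_def)
  have GF12: "\<And>R. on12 G ** (on12 F ** R) = R" by (simp add: matrix_mul_assoc on12_mult[symmetric] GF on12_one)
  have GF23: "\<And>R. on23 G ** (on23 F ** R) = R" by (simp add: matrix_mul_assoc on23_mult[symmetric] GF on23_one)
  have c2: "on23 X ** on12 F ** on23 F = on12 F ** on23 F ** on12 X" using cp by (simp add: compatible_def)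
  have h1: "on23 X ** on12 F = on12 F ** (on23 F ** on12 X ** on23 G)"
  proof -
    have "on23 X ** on12 F = (on23 X ** on12 F ** on23 F) ** on23 G"
      by (simp add: matrix_mul_assoc[symmetric] on23_mult[symmetric] FG on23_one)
    also have "\<dots> = on12 F ** (on23 F ** on12 X ** on23 G)" by (simp add: c2 matrix_mul_assoc)
    finally show ?thesis .
  qed
  have u: "tr2 (X ** on2 D) = mat 1" unfolding D_def D_op_def by (rule tr_unit2[OF skew_props(1)[OF sX]])
  have "F = F ** trw3 D (on23 F ** on12 X ** on23 G)"
    using arg_cong[OF h1, of "trw3 D"] by (simp add: trw3_on23_on12 u on2_one trw3_on12)
  hence T: "trw3 D (on23 F ** on12 X ** on23 G) = mat 1"
    by (metis GF matrix_mul_assoc matrix_mul_lid)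
  define V where "V = flip ** star F (tau (G ** on2 D))"
  have "star X V = mat 1" using T by (simp add: TR3 V_def)
  hence "V = star (skew_inv X) (mat 1)"
    using skew_props(2)[OF sX] by (metis star_assoc star_flip_l)
  hence "V = on1 D" by (simp add: star_one_r D_def D_op_def)
  hence V: "star F (tau (G ** on2 D)) = flip ** on1 D"
    by (metis V_def flip_flip matrix_mul_assoc matrix_mul_lid)
  have "tau (G ** on2 D) = star (star Ps F) (tau (G ** on2 D))"
    using skew_props(2)[OF sF] by (simp add: Ps_def)
  also have "\<dots> = on2 D ** Ps" by (simp add: star_assoc V I5c)
  finally have "tau (G ** on2 D) = on2 D ** Ps" .
  hence "G ** on2 D = tau (on2 D ** Ps)" by (metis tau_tau)
  thus ?thesis by (simp add: tau_mult G_def D_def Ps_def)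
qed

lemma Kd:
  fixes X F :: "('n::finite) op2"
  assumes sX: "skew_invertible X" and sF: "skew_invertible F" and iF: "invertible F"
    and cp: "compatible X F"
  shows "on2 (D_op X) ** matrix_inv F = tau (skew_inv F) ** on1 (D_op X)"
proof -
  define G where "G = matrix_inv F"
  define D where "D = D_op X"
  define Ps where "Ps = skew_inv F"
  have FG: "F ** G = mat 1" and GF: "G ** F = mat 1" using inv_props[OF iF] by (auto simp: G_def)
  have GF12: "\<And>R. on12 G ** (on12 F ** R) = R" by (simp add: matrix_mul_assoc on12_mult[symmetric] GF on12_one)
  have GF23: "\<And>R. on23 G ** (on23 F ** R) = R" by (simp add: matrix_mul_assoc on23_mult[symmetric] GF on23_one)
  have c1: "on12 X ** on23 F ** on12 F = on23 F ** on12 F ** on23 X" using cp by (simp add: compatible_def)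
  have h1: "on23 G ** on12 X ** on23 F = on12 F ** (on23 X ** on12 G)"
  proof -
    have "on23 G ** on12 X ** on23 F = on23 G ** (on12 X ** on23 F ** on12 F) ** on12 G"
      by (simp add: matrix_mul_assoc[symmetric] on12_mult[symmetric] FG on12_one)
    also have "\<dots> = on23 G ** (on23 F ** on12 F ** on23 X) ** on12 G" by (simp add: c1)
    also have "\<dots> = on12 F ** (on23 X ** on12 G)"
      by (simp add: matrix_mul_assoc[symmetric] GF23)
    finally show ?thesis .
  qed
  have u: "tr2 (X ** on2 D) = mat 1" unfolding D_def D_op_def by (rule tr_unit2[OF skew_props(1)[OF sX]])
  have T: "trw3 D (on23 G ** on12 X ** on23 F) = mat 1"
    using arg_cong[OF h1, of "trw3 D"] by (simp add: trw3_on23_on12 u on2_one trw3_on12 FG)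
  define V where "V = flip ** star G (tau (F ** on2 D))"
  have "star X V = mat 1" using T by (simp add: TR3 V_def)
  hence "V = star (skew_inv X) (mat 1)"
    using skew_props(2)[OF sX] by (metis star_assoc star_flip_l)
  hence "V = on1 D" by (simp add: star_one_r D_def D_op_def)
  hence V: "star (on2 D ** G) (tau F) = flip ** on1 D"
    by (metis V_def EQ3 flip_flip matrix_mul_assoc matrix_mul_lid)
  have fl: "star (tau F) (tau Ps) = flip" using skew_props(2)[OF sF] by (simp add: star_tau Ps_def)
  have "on2 D ** G = star (on2 D ** G) (star (tau F) (tau Ps))" by (simp add: fl)
  also have "\<dots> = tau Ps ** on1 D" by (simp add: star_assoc[symmetric] V I5d)
  finally show ?thesis by (simp add: G_def D_def Ps_def)
qed

lemma canc: assumes "F ** G = mat 1" "G ** F = (mat 1::('n::finite) op2)" "G ** L ** G = G ** R ** G"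
  shows "L = R"
proof -
  have "L = F ** (G ** L ** G) ** F" using assms(1,2) by (simp add: matrix_mul_assoc) (metis matrix_mul_assoc matrix_mul_lid matrix_mul_rid)
  also have "\<dots> = F ** (G ** R ** G) ** F" using assms(3) by simp
  also have "\<dots> = R" using assms(1,2) by (simp add: matrix_mul_assoc) (metis matrix_mul_assoc matrix_mul_lid matrix_mul_rid)
  finally show ?thesis .
qed



theorem corollary3p4:
  fixes X Y F :: "('n::finite) op2"
  assumes "skew_invertible X" and "skew_invertible Y" and "skew_invertible F"
    and "invertible F"
    and "compatible X F" and "compatible Y F"
  shows "(F ** on1 (C_op X) ** on2 (C_op Y) = on1 (C_op Y) ** on2 (C_op X) ** F) \<and>
    (F ** on1 (D_op X) ** on2 (D_op Y) = on1 (D_op Y) ** on2 (D_op X) ** F) \<and>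
    (F ** on2 (C_op X ** D_op Y) = on1 (C_op X ** D_op Y) ** F) \<and>
    (F ** on1 (D_op Y ** C_op X) = on2 (D_op Y ** C_op X) ** F) \<and>
    (tr1 (on1 (C_op X) ** matrix_inv F) = C_op X ** D_op F) \<and>
    (C_op X ** D_op F = D_op F ** C_op X) \<and>
    (tr2 (on2 (D_op X) ** matrix_inv F) = C_op F ** D_op X) \<and>
    (C_op F ** D_op X = D_op X ** C_op F)"
proof -
  define G where "G = matrix_inv F"
  define Ps where "Ps = skew_inv F"
  define CX where "CX = C_op X"
  define CY where "CY = C_op Y"
  define DX where "DX = D_op X"
  define DY where "DY = D_op Y"
  have FG: "F ** G = mat 1" and GF: "G ** F = mat 1" using inv_props[OF assms(4)] by (auto simp: G_def)
  have kaX: "G ** on1 CX = on2 CX ** tau Ps" using Ka[OF assms(1,3,4,5)] by (simp add: G_def CX_def Ps_def)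
  have kaY: "G ** on1 CY = on2 CY ** tau Ps" using Ka[OF assms(2,3,4,6)] by (simp add: G_def CY_def Ps_def)
  have kbX: "on1 CX ** G = tau Ps ** on2 CX" using Kb[OF assms(1,3,4,5)] by (simp add: G_def CX_def Ps_def)
  have kbY: "on1 CY ** G = tau Ps ** on2 CY" using Kb[OF assms(2,3,4,6)] by (simp add: G_def CY_def Ps_def)
  have kcX: "G ** on2 DX = on1 DX ** tau Ps" using Kc[OF assms(1,3,4,5)] by (simp add: G_def DX_def Ps_def)
  have kcY: "G ** on2 DY = on1 DY ** tau Ps" using Kc[OF assms(2,3,4,6)] by (simp add: G_def DY_def Ps_def)
  have kdX: "on2 DX ** G = tau Ps ** on1 DX" using Kd[OF assms(1,3,4,5)] by (simp add: G_def DX_def Ps_def)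
  have kdY: "on2 DY ** G = tau Ps ** on1 DY" using Kd[OF assms(2,3,4,6)] by (simp add: G_def DY_def Ps_def)
  have kaX': "\<And>R. G ** (on1 CX ** R) = on2 CX ** (tau Ps ** R)" using kaX by (metis matrix_mul_assoc)
  have kaY': "\<And>R. G ** (on1 CY ** R) = on2 CY ** (tau Ps ** R)" using kaY by (metis matrix_mul_assoc)
  have kcX': "\<And>R. G ** (on2 DX ** R) = on1 DX ** (tau Ps ** R)" using kcX by (metis matrix_mul_assoc)
  have kcY': "\<And>R. G ** (on2 DY ** R) = on1 DY ** (tau Ps ** R)" using kcY by (metis matrix_mul_assoc)
  have comm': "\<And>A B R. on1 A ** (on2 B ** R) = on2 B ** (on1 A ** (R::('n::finite) op2))"
    by (metis matrix_mul_assoc on12_comm)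
  have GFA: "\<And>M. G ** (F ** M) = M" using GF by (metis matrix_mul_assoc matrix_mul_lid)
  have e1: "F ** on1 CX ** on2 CY = on1 CY ** on2 CX ** F"
  proof (rule canc[OF FG GF])
    have "G ** (F ** on1 CX ** on2 CY) ** G = on2 CY ** (on1 CX ** G)"
      by (simp add: matrix_mul_assoc[symmetric] GFA comm')
    also have "\<dots> = on2 CY ** (tau Ps ** on2 CX)" by (simp add: kbX)
    also have "\<dots> = G ** (on1 CY ** on2 CX ** F) ** G"
      by (simp add: matrix_mul_assoc[symmetric] FG kaY')
    finally show "G ** (F ** on1 CX ** on2 CY) ** G = G ** (on1 CY ** on2 CX ** F) ** G" .
  qed
  have e2: "F ** on1 DX ** on2 DY = on1 DY ** on2 DX ** F"
  proof (rule canc[OF FG GF])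
    have "G ** (F ** on1 DX ** on2 DY) ** G = on1 DX ** (on2 DY ** G)"
      by (simp add: matrix_mul_assoc[symmetric] GFA)
    also have "\<dots> = on1 DX ** (tau Ps ** on1 DY)" by (simp add: kdY)
    also have "\<dots> = G ** (on2 DX ** on1 DY)" by (simp add: kcX')
    also have "\<dots> = G ** (on1 DY ** on2 DX ** F) ** G"
      by (simp add: matrix_mul_assoc[symmetric] FG on12_comm)
    finally show "G ** (F ** on1 DX ** on2 DY) ** G = G ** (on1 DY ** on2 DX ** F) ** G" .
  qed
  have e3: "F ** on2 (CX ** DY) = on1 (CX ** DY) ** F"
  proof (rule canc[OF FG GF])
    have "G ** (F ** on2 (CX ** DY)) ** G = on2 CX ** (on2 DY ** G)"
      by (simp add: matrix_mul_assoc[symmetric] GFA on2_mult)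
    also have "\<dots> = on2 CX ** (tau Ps ** on1 DY)" by (simp add: kdY)
    also have "\<dots> = G ** (on1 CX ** on1 DY)" by (simp add: kaX')
    also have "\<dots> = G ** (on1 (CX ** DY) ** F) ** G"
      by (simp add: matrix_mul_assoc[symmetric] FG on1_mult)
    finally show "G ** (F ** on2 (CX ** DY)) ** G = G ** (on1 (CX ** DY) ** F) ** G" .
  qed
  have e4: "F ** on1 (DY ** CX) = on2 (DY ** CX) ** F"
  proof (rule canc[OF FG GF])
    have "G ** (F ** on1 (DY ** CX)) ** G = on1 DY ** (on1 CX ** G)"
      by (simp add: matrix_mul_assoc[symmetric] GFA on1_mult)
    also have "\<dots> = on1 DY ** (tau Ps ** on2 CX)" by (simp add: kbX)
    also have "\<dots> = G ** (on2 DY ** on2 CX)" by (simp add: kcY')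
    also have "\<dots> = G ** (on2 (DY ** CX) ** F) ** G"
      by (simp add: matrix_mul_assoc[symmetric] FG on2_mult)
    finally show "G ** (F ** on1 (DY ** CX)) ** G = G ** (on2 (DY ** CX) ** F) ** G" .
  qed
  have e5a: "tr1 (on1 CX ** G) = CX ** D_op F"
  proof -
    have "tr1 (on1 CX ** G) = tr1 (G ** on1 CX)" by (rule tr1_cyc)
    also have "\<dots> = CX ** D_op F" by (simp add: kaX tr1_l2 tr1_tau D_op_def Ps_def)
    finally show ?thesis .
  qed
  have e5b: "tr1 (on1 CX ** G) = D_op F ** CX"
    by (simp add: kbX tr1_r2 tr1_tau D_op_def Ps_def)
  have e6a: "tr2 (on2 DX ** G) = C_op F ** DX"
    by (simp add: kdX tr2_r1 tr2_tau C_op_def Ps_def)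
  have e6b: "tr2 (on2 DX ** G) = DX ** C_op F"
  proof -
    have "tr2 (on2 DX ** G) = tr2 (G ** on2 DX)" by (rule tr2_cyc)
    also have "\<dots> = DX ** C_op F" by (simp add: kcX tr2_l1 tr2_tau C_op_def Ps_def)
    finally show ?thesis .
  qed
  show ?thesis
    using e1 e2 e3 e4 e5a e5b e6a e6b by (simp add: G_def CX_def CY_def DX_def DY_def)
qed

end
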